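(* Let $K$ be a field of characteristic zero and let $f(x,y)=\sum_{m,n\ge 0} f_{m,n}\frac{x^m y^n}{m!\,n!}\in K[[x,y]]$ with $f_{0,0}=0$ and $f_{0,1}\neq 0$. Let $y(x)=\sum_{n\ge1} y_n\frac{x^n}{n!}\in K[[x]]$ be the unique formal power series with zero constant term such that $f(x,y(x))=0$. For $k\ge1$ and $j\ge0$ let $a_{k,j}\in K$ be defined by $$A_{k,1}(\varphi_1(x),\dots,\varphi_k(x))=\sum_{j\ge0} a_{k,j}\frac{x^j}{j!},$$ where $\varphi_n(x)=\sum_{m\ge0} f_{m,n}\frac{x^m}{m!}$. Then for every $m\ge1$, $$y_m=\sum_{n=1}^{m}\binom{m}{n}\sum_{k=1}^{n}(-1)^k\,a_{k,m-n}\,B_{n,k}(f_{1,0},f_{2,0},\dots,f_{n-k+1,0}).$$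
   Context: $B_{n,k}$ denotes the partial (exponential) Bell polynomial, defined by $\frac{1}{k!}\big(\sum_{i\ge1}X_i\frac{t^i}{i!}\big)^k=\sum_{n\ge k}B_{n,k}(X_1,\dots,X_{n-k+1})\frac{t^n}{n!}$ (with $B_{0,0}=1$, $B_{n,0}=0$ for $n>0$). $A_{n,1}$ is the polynomial in $X_1^{-1},X_1,\dots,X_n$ given by $$A_{n,1}=X_1^{-(2n-1)}\sum \frac{(-1)^{n-1-r_1}(2n-2-r_1)!}{r_2!\cdots r_n!\,(2!)^{r_2}\cdots(n!)^{r_n}}X_1^{r_1}X_2^{r_2}\cdots X_n^{r_n},$$ the sum running over all sequences $(r_1,\dots,r_n)$ of nonnegative integers with $r_1+\dots+r_n=n-1$ and $r_1+2r_2+\dots+nr_n=2n-2$. Equivalently, $A_{n,1}(X_1,\dots,X_n)$ is the $n$-th Taylor coefficient (coefficient of $y^n/n!$) of the compositional inverse of the series $\sum_{n\ge1}X_n\frac{y^n}{n!}$. Since $\varphi_1(0)=f_{0,1}\ne0$, $\varphi_1(x)$ is invertible in $K[[x]]$, so $A_{k,1}(\varphi_1,\dots,\varphi_k)$ is a well-defined element of $K[[x]]$. *)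

theory Defs
  imports "HOL-Computational_Algebra.Formal_Power_Series"
begin

definition efps :: "(nat \<Rightarrow> 'a::field_char_0) \<Rightarrow> 'a fps" where
  "efps c = Abs_fps (\<lambda>n. c n / fact n)"

definition bell_poly :: "nat \<Rightarrow> nat \<Rightarrow> (nat \<Rightarrow> 'a::field_char_0) \<Rightarrow> 'a" where
  "bell_poly n k X = fact n / fact k *
     fps_nth ((Abs_fps (\<lambda>i. if i = 0 then 0 else X i / fact i)) ^ k) n"

definition A_idx :: "nat \<Rightarrow> (nat \<Rightarrow> nat) set" where
  "A_idx n = {r. (\<forall>i. i \<notin> {1..n} \<longrightarrow> r i = 0) \<and>
                 (\<Sum>i=1..n. r i) = n - 1 \<and> (\<Sum>i=1..n. i * r i) = 2 * n - 2}"

text \<open>The polynomial \<open>A_{n,1}\<close> in \<open>X_1^{-1}, X_1, \<dots>, X_n\<close>, evaluated in \<open>K[[x]]\<close> (\<open>X_1\<close> invertible).\<close>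
definition A1 :: "nat \<Rightarrow> (nat \<Rightarrow> 'a::field_char_0 fps) \<Rightarrow> 'a fps" where
  "A1 n X = inverse (X 1) ^ (2 * n - 1) *
     (\<Sum>r\<in>A_idx n.
        fps_const ((-1) ^ (n - 1 - r 1) * fact (2 * n - 2 - r 1) /
                   (\<Prod>i=2..n. fact (r i) * fact i ^ r i))
        * (\<Prod>i=1..n. X i ^ r i))"

definition phi :: "(nat \<Rightarrow> nat \<Rightarrow> 'a::field_char_0) \<Rightarrow> nat \<Rightarrow> 'a fps" where
  "phi F n = efps (\<lambda>m. F m n)"

text \<open>Substitution \<open>f(x, y(x)) = \<Sum>_n \<phi>_n(x) y(x)^n / n!\<close> for \<open>y\<close> with zero constant term
  (the coefficient of \<open>x^j\<close> only involves \<open>n \<le> j\<close>).\<close>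
definition subst2 :: "(nat \<Rightarrow> nat \<Rightarrow> 'a::field_char_0) \<Rightarrow> 'a fps \<Rightarrow> 'a fps" where
  "subst2 F Y = Abs_fps (\<lambda>j. \<Sum>n\<le>j. fps_nth (phi F n * Y ^ n * fps_const (inverse (fact n))) j)"

definition a_coeff :: "(nat \<Rightarrow> nat \<Rightarrow> 'a::field_char_0) \<Rightarrow> nat \<Rightarrow> nat \<Rightarrow> 'a" where
  "a_coeff F k j = fact j * fps_nth (A1 k (phi F)) j"

end

theory Submission
  imports Defs
begin

unbundle fps_syntax


fun lci :: "'b::comm_ring_1 fps \<Rightarrow> 'b \<Rightarrow> nat \<Rightarrow> 'b" where
  "lci a u 0 = 0"
| "lci a u (Suc n) = (fps_X $ Suc n - (\<Sum>i=0..n. lci a u i * (a^i) $ Suc n)) * u ^ Suc n"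

lemma lci_left:
  fixes a :: "'b::comm_ring_1 fps"
  assumes a0: "a$0 = 0" and au: "a$1 * u = 1"
  shows "Abs_fps (lci a u) oo a = fps_X"
proof -
  let ?i = "Abs_fps (lci a u) oo a"
  have "?i $n = fps_X$n" for n
  proof (cases n)
    case 0
    then show ?thesis using a0 by (simp add: fps_compose_nth)
  next
    case (Suc n1)
    have "?i $ n = (\<Sum>i=0..n1. lci a u i * (a^i)$n) + lci a u (Suc n1) * (a $ 1)^ Suc n1"
      by (simp only: fps_compose_nth) (simp add: Suc startsby_zero_power_nth_same [OF a0] del: power_Suc)
    also have "lci a u (Suc n1) * (a $ 1)^ Suc n1 = (fps_X $ n - (\<Sum>i=0..n1. lci a u i * (a^i)$n)) * (u * a$1) ^ Suc n1"
      by (simp add: Suc power_mult_distrib del: power_Suc)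
    also have "(u * a$1) = 1" using au by (simp add: mult.commute)
    finally show ?thesis by simp
  qed
  then show ?thesis by (simp add: fps_eq_iff)
qed

lemma lci_0: "Abs_fps (lci a u) $ 0 = 0" by simp
lemma lci_1: "Abs_fps (lci (a::'b::comm_ring_1 fps) u) $ 1 = u" by simp

lemma two_sided_inverse:
  fixes a :: "'b::idom fps"
  assumes a0: "a$0 = 0" and au: "a$1 * u = 1"
  shows "Abs_fps (lci a u) oo a = fps_X" "a oo Abs_fps (lci a u) = fps_X"
proof -
  let ?h = "Abs_fps (lci a u)"
  show hl: "?h oo a = fps_X" by (rule lci_left[OF a0 au])
  let ?k = "Abs_fps (lci ?h (a$1))"
  have kh: "?k oo ?h = fps_X" by (rule lci_left) (use au in \<open>simp_all add: mult.commute\<close>)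
  have "?k = ?k oo (?h oo a)" by (simp add: hl)
  also have "\<dots> = (?k oo ?h) oo a" by (rule fps_compose_assoc) (simp_all add: a0)
  also have "\<dots> = a" unfolding kh using a0 by simp
  finally show "a oo ?h = fps_X" using kh by simp
qed

lemma mult_trunc_eq:
  assumes "\<And>k. k \<le> N \<Longrightarrow> A $ k = B $ k"
  shows "(P * A) $ N = (P * B) $ N"
  unfolding fps_mult_nth by (intro sum.cong) (auto simp: assms)

lemma comp_trunc:
  fixes h :: "'b::comm_ring_1 fps"
  assumes h0: "h$0 = 0"
  shows "(P * (c oo h)) $ N = (\<Sum>j=0..N. c$j * (P * h^j) $ N)"
proof -
  have "(P * (c oo h)) $ N = (P * (\<Sum>j=0..N. fps_const (c$j) * h^j)) $ N"
  proof (rule mult_trunc_eq)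
    fix k assume k: "k \<le> N"
    have "(c oo h) $ k = (\<Sum>j=0..N. c$j * (h^j)$k)"
      unfolding fps_compose_nth
      by (rule sum.mono_neutral_left) (use k h0 startsby_zero_power_prefix[OF h0] in auto)
    then show "(c oo h) $ k = (\<Sum>j=0..N. fps_const (c$j) * h^j) $ k"
      by (simp add: fps_sum_nth)
  qed
  also have "\<dots> = (\<Sum>j=0..N. c$j * (P * h^j) $ N)"
  proof -
    have eq: "P * (fps_const (c$j) * h^j) = fps_const (c$j) * (P * h^j)" for j
      by (simp add: mult.left_commute)
    show ?thesis unfolding sum_distrib_left fps_sum_nth eq by simp
  qed
  finally show ?thesis .
qed

lemma fps_X_cancel:
  fixes a b :: "'b::idom fps"
  assumes "fps_X * a = fps_X * b" shows "a = b"
  using assms by simp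

lemma of_nat_mult_nth: "(of_nat c * (f::'b::comm_ring_1 fps)) $ i = of_nat c * f $ i"
  by (simp add: fps_of_nat)

lemma key_m:
  fixes w z :: "'b::idom fps"
  assumes char0: "\<forall>m (x::'b). m > 0 \<longrightarrow> of_nat m * x = 0 \<longrightarrow> x = 0"
    and wz: "w * z = 1" and m: "m > 0"
  shows "(fps_deriv (fps_X * w) * z^m) $ (m-1) = (if m = 1 then 1 else 0)"
proof -
  have hd: "fps_deriv (fps_X * w) * z^m = z^(m-1) + fps_X * (fps_deriv w * z^m)"
  proof -
    have "fps_deriv (fps_X * w) = w + fps_X * fps_deriv w" by (simp add: algebra_simps)
    moreover have "w * z^m = z^(m-1)"
      using m wz by (cases m) (simp_all add: mult.assoc[symmetric])
    ultimately show ?thesis by (simp add: algebra_simps)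
  qed
  show ?thesis
  proof (cases "m = 1")
    case True
    then show ?thesis unfolding hd by simp
  next
    case False
    define k where "k = m - 2"
    have k: "m = Suc (Suc k)" unfolding k_def using m False by presburger
    have dz: "fps_deriv z = - fps_deriv w * z^2"
    proof -
      have "fps_deriv (w * z) = 0" using wz by simp
      then have "w * fps_deriv z + fps_deriv w * z = 0" by (simp add: algebra_simps)
      then have "z * (w * fps_deriv z + fps_deriv w * z) = 0" by simp
      then have "(w * z) * fps_deriv z + fps_deriv w * z^2 = 0" by (simp add: algebra_simps power2_eq_square)
      then show ?thesis using wz by (simp add: eq_neg_iff_add_eq_0)
    qed
    have "fps_deriv (z^(Suc k)) = of_nat (Suc k) * fps_deriv z * z^k"
      using fps_deriv_power'[of z "Suc k"] by simp
    also have "\<dots> = - (of_nat (Suc k) * (fps_deriv w * (z^2 * z^k)))"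
      by (simp add: dz algebra_simps)
    also have "z^2 * z^k = z^m" by (simp add: k power_add[symmetric])
    finally have dP: "fps_deriv (z^(Suc k)) = - (of_nat (Suc k) * (fps_deriv w * z^m))" .
    have e1: "of_nat (Suc k) * (fps_deriv (fps_X * w) * z^m) =
        of_nat (Suc k) * z^(Suc k) - fps_X * fps_deriv (z^(Suc k))"
      unfolding hd dP using k by (simp add: algebra_simps)
    have "of_nat (Suc k) * ((fps_deriv (fps_X * w) * z^m) $ (m-1))
        = (of_nat (Suc k) * (fps_deriv (fps_X * w) * z^m)) $ (Suc k)"
      unfolding of_nat_mult_nth using k by simp
    also have "\<dots> = 0"
    proof -
      have "(of_nat (Suc k) * P - fps_X * fps_deriv P) $ (Suc k) = 0" for P :: "'b fps"
        unfolding fps_sub_nth of_nat_mult_nth fps_X_mult_nth fps_deriv_nth by simp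
      then show ?thesis unfolding e1 .
    qed
    finally show ?thesis using char0 False by auto
  qed
qed

lemma lagrange:
  fixes G U V h :: "'b::idom fps"
  assumes char0: "\<forall>m (x::'b). m > 0 \<longrightarrow> of_nat m * x = 0 \<longrightarrow> x = 0"
    and GU: "G = fps_X * U" and UV: "U * V = 1" and h0: "h$0 = 0"
    and Gh: "G oo h = fps_X" and n: "n > 0"
  shows "of_nat n * h$n = (V^n) $ (n-1)"
proof -
  define w where "w = Abs_fps (\<lambda>k. h$(k+1))"
  have hw: "h = fps_X * w"
    by (rule fps_ext) (simp add: w_def h0 fps_X_mult_nth)
  define z where "z = U oo h"
  have "fps_X * (w * z) = fps_X * 1"
    using Gh unfolding GU fps_compose_mult_distrib[OF h0] fps_X_fps_compose_startby0[OF h0] z_def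
    by (simp add: hw mult.assoc)
  then have wz: "w * z = 1" by (rule fps_X_cancel)
  have "z * (V oo h) = 1"
    unfolding z_def fps_compose_mult_distrib[OF h0, symmetric] UV by simp
  then have Vh: "V oo h = w"
    by (metis mult.assoc mult.commute mult_1_right wz)
  have cw: "(V^n) oo h = w^n" by (simp add: fps_compose_power[OF h0, symmetric] Vh)
  have "of_nat n * h$n = (fps_deriv h * z^n * ((V^n) oo h)) $ (n-1)"
  proof -
    have "z^n * w^n = 1" by (simp add: power_mult_distrib[symmetric] mult.commute wz)
    then have e: "fps_deriv h * z^n * ((V^n) oo h) = fps_deriv h" by (simp add: cw mult.assoc)
    have "(fps_deriv h) $ (n-1) = of_nat n * h$n" using n by (simp add: fps_deriv_nth)
    then show ?thesis by (simp only: e)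
  qed
  also have "\<dots> = (\<Sum>j=0..n-1. (V^n)$j * (fps_deriv h * z^n * h^j) $ (n-1))"
    by (rule comp_trunc[OF h0])
  also have "\<dots> = (\<Sum>j=0..n-1. (if j = n-1 then (V^n)$j else 0))"
  proof (intro sum.cong refl)
    fix j assume j: "j \<in> {0..n-1}"
    have "fps_deriv h * z^n * h^j = fps_X^j * (fps_deriv (fps_X * w) * z^(n-j)) * (z^j * w^j)"
      using j n by (simp add: hw power_mult_distrib algebra_simps power_add[symmetric])
    also have "z^j * w^j = 1" by (simp add: power_mult_distrib[symmetric] mult.commute wz)
    finally have "(fps_deriv h * z^n * h^j) $ (n-1) = (fps_deriv (fps_X * w) * z^(n-j)) $ (n-j-1)"
      using j n by (simp add: fps_X_power_mult_nth)
    also have "\<dots> = (if n - j = 1 then 1 else 0)"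
      using key_m[OF char0 wz, where m="n-j"] j n by simp
    finally show "(V^n)$j * (fps_deriv h * z^n * h^j) $ (n-1) = (if j = n-1 then (V^n)$j else 0)"
      using j n by auto
  qed
  also have "\<dots> = (V^n) $ (n-1)" by simp
  finally show ?thesis .
qed



definition ev :: "'b::comm_ring_1 fps fps \<Rightarrow> 'b fps \<Rightarrow> 'b fps" where
  "ev P Y = Abs_fps (\<lambda>m. (\<Sum>j=0..m. P$j * Y^j) $ m)"

lemma high_power_nth:
  fixes Y :: "'b::comm_ring_1 fps"
  assumes Y0: "Y$0 = 0" and "m < j"
  shows "(A * Y^j) $ m = 0"
  unfolding fps_mult_nth
  by (rule sum.neutral) (use assms startsby_zero_power_prefix[OF Y0] in auto)

lemma ev_trunc:
  fixes Y :: "'b::comm_ring_1 fps"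
  assumes Y0: "Y$0 = 0" and mN: "m \<le> N"
  shows "(ev P Y) $ m = (\<Sum>j=0..N. P$j * Y^j) $ m"
  unfolding ev_def fps_sum_nth
  by (simp, rule sum.mono_neutral_left) (use mN high_power_nth[OF Y0] in auto)

lemma ev_mult:
  fixes Y :: "'b::comm_ring_1 fps"
  assumes Y0: "Y$0 = 0"
  shows "ev (P * Q) Y = ev P Y * ev Q Y"
proof (rule fps_ext)
  fix m
  let ?TP = "\<Sum>j=0..m. P$j * Y^j" and ?TQ = "\<Sum>j=0..m. Q$j * Y^j"
  have "(ev P Y * ev Q Y) $ m = (?TP * ?TQ) $ m"
    unfolding fps_mult_nth
  proof (rule sum.cong[OF refl])
    fix x assume "x \<in> {0..m}"
    then show "ev P Y $ x * ev Q Y $ (m - x) = ?TP $ x * ?TQ $ (m - x)"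
      using ev_trunc[OF Y0, where m=x and N=m and P=P] ev_trunc[OF Y0, where m="m-x" and N=m and P=Q]
      by simp
  qed
  also have "?TP * ?TQ = (\<Sum>j\<in>{0..m}. \<Sum>l\<in>{0..m}. P$j * Q$l * Y^(j+l))"
    by (simp add: sum_product power_add algebra_simps)
  also have "\<dots> = (\<Sum>(j,l)\<in>{0..m}\<times>{0..m}. P$j * Q$l * Y^(j+l))"
    by (simp add: sum.cartesian_product)
  also have "\<dots> $ m = (\<Sum>(j,l)\<in>{0..m}\<times>{0..m}. (P$j * Q$l * Y^(j+l)) $ m)"
    by (simp add: fps_sum_nth case_prod_unfold)
  also have "\<dots> = (\<Sum>(j,l)\<in>{(j,l). j+l \<le> m}. (P$j * Q$l * Y^(j+l)) $ m)"
  proof (rule sum.mono_neutral_right)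
    show "finite ({0..m}\<times>{0..m})" by simp
    show "{(j,l). j+l \<le> m} \<subseteq> {0..m}\<times>{0..m}" by auto
    show "\<forall>x\<in>{0..m}\<times>{0..m} - {(j,l). j+l \<le> m}. (case x of (j,l) \<Rightarrow> (P$j * Q$l * Y^(j+l)) $ m) = 0"
    proof
      fix x assume "x \<in> {0..m}\<times>{0..m} - {(j,l). j+l \<le> m}"
      then obtain j l where x: "x = (j,l)" "\<not> j+l \<le> m" by auto
      then show "(case x of (j,l) \<Rightarrow> (P$j * Q$l * Y^(j+l)) $ m) = 0"
        using high_power_nth[OF Y0, of m "j+l" "P$j * Q$l"] by simp
    qed
  qed
  also have "\<dots> = (\<Sum>k\<le>m. \<Sum>j\<le>k. (P$j * Q$(k-j) * Y^(j+(k-j))) $ m)"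
    by (rule sum.triangle_reindex_eq)
  also have "\<dots> = (\<Sum>k=0..m. ((P*Q)$k * Y^k) $ m)"
  proof (rule sum.cong)
    show "{..m} = {0..m}" by auto
  next
    fix k assume "k \<in> {0..m}"
    show "(\<Sum>j\<le>k. (P$j * Q$(k-j) * Y^(j+(k-j))) $ m) = ((P*Q)$k * Y^k) $ m"
      unfolding fps_mult_nth sum_distrib_right fps_sum_nth by (rule sum.cong) auto
  qed
  also have "\<dots> = (ev (P*Q) Y) $ m"
    by (simp add: ev_def fps_sum_nth)
  finally show "ev (P * Q) Y $ m = (ev P Y * ev Q Y) $ m" ..
qed

lemma ev_one: "ev 1 Y = 1"
  by (rule fps_ext) (simp add: ev_def fps_sum_nth sum.atLeast_Suc_atMost)

lemma ev_power:
  fixes Y :: "'b::comm_ring_1 fps"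
  assumes Y0: "Y$0 = 0"
  shows "ev (P^k) Y = (ev P Y)^k"
  by (induction k) (simp_all add: ev_one ev_mult[OF Y0])

lemma ev_X:
  fixes Y :: "'b::comm_ring_1 fps"
  assumes Y0: "Y$0 = 0"
  shows "ev fps_X Y = Y"
proof (rule fps_ext)
  fix m show "ev fps_X Y $ m = Y $ m"
    using Y0 by (cases m) (simp_all add: ev_def fps_sum_nth sum.atLeast_Suc_atMost)
qed

lemma ev_0:
  fixes Y :: "'b::comm_ring_1 fps"
  shows "(ev b Y) $ 0 = (b $ 0) $ 0"
  by (simp add: ev_def)

lemma ev_compose:
  fixes Y :: "'b::comm_ring_1 fps"
  assumes Y0: "Y$0 = 0" and b0: "b$0 = 0"
  shows "ev (a oo b) Y = ev a (ev b Y)"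
proof (rule fps_ext)
  fix m
  let ?E = "ev b Y"
  have E0: "?E $ 0 = 0" by (simp add: ev_0 b0)
  have "ev a ?E $ m = (\<Sum>i=0..m. (a$i * ?E^i) $ m)"
    by (simp add: ev_def fps_sum_nth)
  also have "\<dots> = (\<Sum>i=0..m. (a$i * (\<Sum>j=0..m. (b^i)$j * Y^j)) $ m)"
  proof (intro sum.cong refl mult_trunc_eq)
    fix i k assume "k \<le> m"
    then show "(?E^i) $ k = (\<Sum>j=0..m. (b^i)$j * Y^j) $ k"
      by (simp add: ev_power[OF Y0, symmetric] ev_trunc[OF Y0])
  qed
  also have "\<dots> = (\<Sum>i=0..m. \<Sum>j=0..m. (a$i * (b^i)$j * Y^j) $ m)"
    by (simp add: sum_distrib_left fps_sum_nth mult.assoc)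
  also have "\<dots> = (\<Sum>j=0..m. \<Sum>i=0..m. (a$i * (b^i)$j * Y^j) $ m)"
    by (rule sum.swap)
  also have "\<dots> = (\<Sum>j=0..m. \<Sum>i=0..j. (a$i * (b^i)$j * Y^j) $ m)"
  proof (rule sum.cong[OF refl])
    fix j assume j: "j \<in> {0..m}"
    show "(\<Sum>i=0..m. (a$i * (b^i)$j * Y^j) $ m) = (\<Sum>i=0..j. (a$i * (b^i)$j * Y^j) $ m)"
      by (rule sum.mono_neutral_right) (use j startsby_zero_power_prefix[OF b0] in auto)
  qed
  also have "\<dots> = ev (a oo b) Y $ m"
    by (simp add: ev_def fps_sum_nth fps_compose_nth sum_distrib_right)
  finally show "ev (a oo b) Y $ m = ev a ?E $ m" ..
qed



definition IS :: "nat \<Rightarrow> nat \<Rightarrow> nat \<Rightarrow> (nat \<Rightarrow> nat) set" where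
  "IS L s N = {r. (\<forall>i. i \<notin> {1..L} \<longrightarrow> r i = 0) \<and> (\<Sum>i=1..L. r i) = s \<and> (\<Sum>i=1..L. i * r i) = N}"

lemma finite_IS: "finite (IS L s N)"
proof (rule finite_subset)
  show "IS L s N \<subseteq> {r. \<forall>x. (x \<in> {1..L} \<longrightarrow> r x \<in> {0..s}) \<and> (x \<notin> {1..L} \<longrightarrow> r x = 0)}"
  proof (clarsimp simp: IS_def)
    fix r :: "nat \<Rightarrow> nat" and x :: nat assume "\<forall>i. (Suc 0 \<le> i \<longrightarrow> \<not> i \<le> L) \<longrightarrow> r i = 0" "Suc 0 \<le> x" "x \<le> L"
    then show "r x \<le> (\<Sum>i = Suc 0..L. r i)"
      using member_le_sum[of x "{1..L}" r] by simp
  qed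
  show "finite {r. \<forall>x. (x \<in> {1..L} \<longrightarrow> r x \<in> {0..s}) \<and> (x \<notin> {1..L} \<longrightarrow> r x = (0::nat))}"
    by (rule finite_set_of_finite_funs) auto
qed

lemma sum_upd:
  assumes "finite A" "k \<in> A"
  shows "(\<Sum>i\<in>A. g i ((r(k:=v)) i)) + g k (r k) = (\<Sum>i\<in>A. g i (r i)) + (g k v :: 'b::comm_monoid_add)"
proof -
  have "(\<Sum>i\<in>A. g i ((r(k:=v)) i)) = g k v + (\<Sum>i\<in>A-{k}. g i (r i))"
    using assms by (simp add: sum.remove)
  moreover have "(\<Sum>i\<in>A. g i (r i)) = g k (r k) + (\<Sum>i\<in>A-{k}. g i (r i))"
    using assms by (simp add: sum.remove)
  ultimately show ?thesis by (simp add: ac_simps)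
qed

lemma prod_upd:
  assumes "finite A" "k \<in> A"
  shows "(\<Prod>i\<in>A. g i ((r(k:=v)) i)) = g k v * (\<Prod>i\<in>A-{k}. g i (r i))"
    and "(\<Prod>i\<in>A. g i (r i)) = g k (r k) * (\<Prod>i\<in>A-{k}. (g i (r i) :: 'b::comm_monoid_mult))"
  using assms by (simp_all add: prod.remove)

definition mt :: "nat \<Rightarrow> 'a::field_char_0 fps fps \<Rightarrow> (nat \<Rightarrow> nat) \<Rightarrow> 'a fps" where
  "mt L B r = (\<Prod>i=1..L. fps_const (inverse (fact (r i))) * (B$i)^(r i))"

lemma mt_step:
  fixes B :: "'a::field_char_0 fps fps"
  assumes k: "k \<in> {1..L}" and rk: "r k > 0"
  shows "of_nat (r k) * mt L B r = B$k * mt L B (r(k := r k - 1))"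
proof -
  obtain m where m: "r k = Suc m" using rk by (cases "r k") auto
  let ?g = "\<lambda>i j. fps_const (inverse (fact j)) * (B$i)^j"
  have "fps_const (of_nat (Suc m)) * ?g k (Suc m) = B$k * ?g k m"
  proof -
    have nz: "(of_nat (Suc m) :: 'a) \<noteq> 0" by (simp only: of_nat_eq_0_iff)
    have "(of_nat (Suc m) :: 'a) * inverse (fact (Suc m)) = (of_nat (Suc m) * inverse (of_nat (Suc m))) * inverse (fact m)"
      by (simp only: fact_Suc inverse_mult_distrib mult.assoc of_nat_mult)
    also have "\<dots> = inverse (fact m)" using nz by simp
    finally have "(of_nat (Suc m) :: 'a) * inverse (fact (Suc m)) = inverse (fact m)" .
    then have "fps_const (of_nat (Suc m)) * fps_const (inverse (fact (Suc m))) = (fps_const (inverse (fact m)) :: 'a fps)"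
      by (metis fps_const_mult)
    then show ?thesis by (simp add: algebra_simps)
  qed
  note key = this
  let ?R = "\<Prod>i\<in>{1..L}-{k}. ?g i (r i)"
  have P1: "mt L B r = ?g k (r k) * ?R"
    unfolding mt_def by (rule prod.remove) (use k in auto)
  have P2: "mt L B (r(k := m)) = ?g k m * ?R"
  proof -
    have "mt L B (r(k := m)) = ?g k ((r(k := m)) k) * (\<Prod>i\<in>{1..L}-{k}. ?g i ((r(k := m)) i))"
      unfolding mt_def by (rule prod.remove) (use k in auto)
    also have "(\<Prod>i\<in>{1..L}-{k}. ?g i ((r(k := m)) i)) = ?R"
      by (rule prod.cong) auto
    finally show ?thesis by (simp only: fun_upd_same)
  qed
  have "of_nat (r k) * mt L B r = (fps_const (of_nat (Suc m)) * ?g k (Suc m)) * ?R"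
    unfolding P1 m fps_of_nat by (simp only: mult.assoc)
  also have "\<dots> = B$k * mt L B (r(k := r k - 1))"
    unfolding key using m P2 by (simp add: mult.assoc)
  finally show ?thesis .
qed

lemma IS_0: "IS L 0 N = (if N = 0 then {\<lambda>_. 0} else {})"
proof -
  have "r \<in> IS L 0 N \<longleftrightarrow> N = 0 \<and> r = (\<lambda>_. 0)" for r
  proof
    assume "r \<in> IS L 0 N"
    then have a: "\<forall>i. i \<notin> {1..L} \<longrightarrow> r i = 0" "(\<Sum>i=1..L. r i) = 0" "(\<Sum>i=1..L. i * r i) = N"
      by (auto simp: IS_def)
    then have "\<forall>i\<in>{1..L}. r i = 0" by simp
    have "r = (\<lambda>_. 0)"
    proof (rule ext)
      fix i show "r i = 0" using a(1) \<open>\<forall>i\<in>{1..L}. r i = 0\<close> by (cases "i \<in> {1..L}") auto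
    qed
    with a(3) show "N = 0 \<and> r = (\<lambda>_. 0)" by simp
  qed (auto simp: IS_def)
  then show ?thesis by auto
qed

lemma multinomial:
  fixes B :: "'a::field_char_0 fps fps"
  assumes B0: "B$0 = 0" and NL: "N \<le> L"
  shows "(B^s) $ N = fps_const (fact s) * (\<Sum>r\<in>IS L s N. mt L B r)"
  using NL
proof (induction s arbitrary: N)
  case 0
  show ?case by (simp add: IS_0 mt_def)
next
  case (Suc s)
  let ?S = "Sigma {1..N} (\<lambda>k. IS L s (N-k))"
  let ?T = "Sigma (IS L (Suc s) N) (\<lambda>r. {k\<in>{1..L}. r k > 0})"
  have "(B^Suc s) $ N = (\<Sum>k=0..N. B$k * (B^s)$(N-k))"
    by (simp add: fps_mult_nth)
  also have "\<dots> = (\<Sum>k=1..N. B$k * (B^s)$(N-k))"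
    by (simp add: sum.atLeast_Suc_atMost B0)
  also have "\<dots> = (\<Sum>k=1..N. B$k * (fps_const (fact s) * (\<Sum>r\<in>IS L s (N-k). mt L B r)))"
    using Suc.prems by (intro sum.cong refl) (simp add: Suc.IH)
  also have "\<dots> = fps_const (fact s) * (\<Sum>(k,r)\<in>?S. B$k * mt L B r)"
    by (simp add: sum.Sigma[symmetric] finite_IS sum_distrib_left algebra_simps)
  also have "(\<Sum>(k,r)\<in>?S. B$k * mt L B r) = (\<Sum>(r,k)\<in>?T. B$k * mt L B (r(k := r k - 1)))"
  proof (rule sum.reindex_bij_witness[where i = "\<lambda>(r,k). (k, r(k := r k - 1))" and j = "\<lambda>(k,r). (r(k := Suc (r k)), k)"])
    fix a assume a: "a \<in> ?S"
    then obtain k r where ar: "a = (k,r)" and k: "k \<in> {1..N}" and r: "r \<in> IS L s (N-k)" by auto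
    have kL: "k \<in> {1..L}" using k Suc.prems by auto
    show "(case case a of (k, r) \<Rightarrow> (r(k := Suc (r k)), k) of (r, k) \<Rightarrow> (k, r(k := r k - 1))) = a"
      using ar by auto
    have s1: "(\<Sum>i=1..L. (r(k := Suc (r k))) i) = Suc s"
      using sum_upd[of "{1..L}" k "\<lambda>i j. j" r "Suc (r k)"] kL r by (simp add: IS_def)
    have s2: "(\<Sum>i=1..L. i * (r(k := Suc (r k))) i) = N"
      using sum_upd[of "{1..L}" k "\<lambda>i j. i * j" r "Suc (r k)"] kL r k by (simp add: IS_def)
    show "(case a of (k, r) \<Rightarrow> (r(k := Suc (r k)), k)) \<in> ?T"
      using ar s1 s2 r kL by (auto simp: IS_def)
    show "(case case a of (k, r) \<Rightarrow> (r(k := Suc (r k)), k) of (r, k) \<Rightarrow> B $ k * mt L B (r(k := r k - 1))) =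
          (case a of (k, r) \<Rightarrow> B $ k * mt L B r)"
      using ar by (simp add: fun_upd_idem)
  next
    fix b assume b: "b \<in> ?T"
    then obtain r k where br: "b = (r,k)" and r: "r \<in> IS L (Suc s) N" and kL: "k \<in> {1..L}" and rk: "r k > 0" by auto
    show "(case case b of (r, k) \<Rightarrow> (k, r(k := r k - 1)) of (k, r) \<Rightarrow> (r(k := Suc (r k)), k)) = b"
      using br rk by auto
    have s1: "(\<Sum>i=1..L. (r(k := r k - 1)) i) = s"
      using sum_upd[of "{1..L}" k "\<lambda>i j. j" r "r k - 1"] kL r rk by (simp add: IS_def)
    obtain m where m: "r k = Suc m" using rk by (cases "r k") auto
    have "(\<Sum>i=1..L. i * (r(k := r k - 1)) i) + k * Suc m = N + k * m"
      using sum_upd[of "{1..L}" k "\<lambda>i j. i * j" r "r k - 1"] kL r m by (simp add: IS_def)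
    then have s2: "(\<Sum>i=1..L. i * (r(k := r k - 1)) i) + k = N" by simp
    show "(case b of (r, k) \<Rightarrow> (k, r(k := r k - 1))) \<in> ?S"
      using br s1 s2 r kL by (auto simp: IS_def)
  qed
  also have "\<dots> = (\<Sum>r\<in>IS L (Suc s) N. \<Sum>k\<in>{k\<in>{1..L}. r k > 0}. of_nat (r k) * mt L B r)"
    by (simp add: sum.Sigma[symmetric] finite_IS mt_step)
  also have "\<dots> = (\<Sum>r\<in>IS L (Suc s) N. of_nat (Suc s) * mt L B r)"
  proof (rule sum.cong[OF refl])
    fix r assume r: "r \<in> IS L (Suc s) N"
    have "(\<Sum>k\<in>{k\<in>{1..L}. r k > 0}. r k) = (\<Sum>k\<in>{1..L}. r k)"
      by (rule sum.mono_neutral_left) auto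
    also have "\<dots> = Suc s" using r by (simp add: IS_def)
    finally have "(\<Sum>k\<in>{k\<in>{1..L}. r k > 0}. of_nat (r k) :: 'a fps) = of_nat (Suc s)"
      by (metis of_nat_sum)
    then show "(\<Sum>k\<in>{k\<in>{1..L}. r k > 0}. of_nat (r k) * mt L B r) = of_nat (Suc s) * mt L B r"
      by (simp add: sum_distrib_right[symmetric])
  qed
  finally have eq: "(B^Suc s) $ N = fps_const (fact s) * (\<Sum>r\<in>IS L (Suc s) N. of_nat (Suc s) * mt L B r)" .
  have c: "fps_const (fact s) * of_nat (Suc s) = (fps_const (fact (Suc s)) :: 'a fps)"
    by (metis fps_const_mult fps_of_nat fact_Suc mult.commute)
  show ?case unfolding eq sum_distrib_left[symmetric] mult.assoc[symmetric] c ..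
qed



lemma fps_const_sum: "fps_const (sum f A) = (\<Sum>x\<in>A. fps_const (f x :: 'b::comm_monoid_add))"
  by (induction A rule: infinite_finite_induct) (simp_all del: fps_const_add add: fps_const_add[symmetric])

definition Lf :: "'a::field_char_0 fps \<Rightarrow> 'a fps fps" where
  "Lf p = Abs_fps (\<lambda>s. fps_const (p$s))"

lemma Lf_nth [simp]: "Lf p $ s = fps_const (p $ s)"
  by (simp add: Lf_def)

lemma Lf_mult: "Lf (p * q) = Lf p * Lf q"
  by (rule fps_ext) (simp add: fps_mult_nth fps_const_sum)

lemma Lf_add: "Lf (p + q) = Lf p + Lf q"
  by (rule fps_ext) simp

lemma Lf_1: "Lf 1 = 1"
  by (rule fps_ext) simp

lemma Lf_X: "Lf fps_X = fps_X"
  by (rule fps_ext) simp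

lemma Lf_power: "Lf (p ^ n) = Lf p ^ n"
  by (induction n) (simp_all add: Lf_1 Lf_mult)

lemma neg_binomial:
  fixes U V B :: "'a::field_char_0 fps fps"
  assumes U0: "U$0 = c" and ci: "c * \<iota> = 1" and UV: "U * V = 1"
    and B: "B = U - fps_const c" and n: "n > 0"
  shows "(V^n) $ (n-1) = (\<Sum>s=0..n-1. fps_const ((-1)^s * of_nat ((n-1+s) choose s)) * \<iota>^(n+s) * (B^s) $ (n-1))"
proof -
  define Bt where "Bt = fps_const \<iota> * B"
  have Bt0: "Bt $ 0 = 0" by (simp add: Bt_def B U0)
  define Nb where "Nb = fps_binomial (- of_nat n :: 'a)"
  define P where "P = (1 + fps_X :: 'a fps)^n"
  have PN: "P * Nb = 1"
    unfolding P_def Nb_def fps_binomial_of_nat[symmetric] fps_binomial_add_mult[symmetric] by simp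
  define W where "W = Lf Nb oo Bt"
  have "(Lf P oo Bt) * W = 1"
    unfolding W_def fps_compose_mult_distrib[OF Bt0, symmetric] Lf_mult[symmetric] PN Lf_1 by simp
  moreover have "Lf P oo Bt = (fps_const \<iota> * U)^n"
  proof -
    have "Lf P oo Bt = ((1 + fps_X) oo Bt)^n"
      unfolding P_def Lf_power Lf_add Lf_1 Lf_X fps_compose_power[OF Bt0] ..
    also have "(1 + fps_X) oo Bt = fps_const \<iota> * U"
    proof -
      have "(1 + fps_X) oo Bt = 1 + Bt" by (simp add: fps_compose_add_distrib Bt0)
      also have "\<dots> = fps_const \<iota> * fps_const c + fps_const \<iota> * B"
        using ci by (simp add: Bt_def mult.commute)
      also have "\<dots> = fps_const \<iota> * U" by (simp add: B right_diff_distrib)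
      finally show ?thesis .
    qed
    finally show ?thesis .
  qed
  ultimately have e: "fps_const \<iota> ^ n * U^n * W = 1" by (simp add: power_mult_distrib)
  have Vn: "V^n = fps_const (\<iota>^n) * W"
  proof -
    have "V^n = V^n * (fps_const \<iota> ^ n * U^n * W)" using e by simp
    also have "\<dots> = fps_const \<iota> ^ n * W * (U * V)^n" by (simp add: power_mult_distrib algebra_simps)
    finally show ?thesis using UV by simp
  qed
  have "(V^n) $ (n-1) = \<iota>^n * W $ (n-1)" unfolding Vn by simp
  also have "W $ (n-1) = (\<Sum>s=0..n-1. fps_const (Nb$s) * (Bt^s) $ (n-1))"
    unfolding W_def fps_compose_nth by simp
  also have "\<dots> = (\<Sum>s=0..n-1. fps_const ((-1)^s * of_nat ((n-1+s) choose s)) * \<iota>^s * (B^s) $ (n-1))"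
  proof (rule sum.cong[OF refl])
    fix s
    have "Nb$s = (-1)^s * of_nat ((n-1+s) choose s)"
      unfolding Nb_def fps_binomial_nth gbinomial_minus binomial_gbinomial using n by (simp add: of_nat_diff)
    then show "fps_const (Nb$s) * (Bt^s) $ (n-1) = fps_const ((-1)^s * of_nat ((n-1+s) choose s)) * \<iota>^s * (B^s) $ (n-1)"
      by (simp add: Bt_def power_mult_distrib mult.assoc)
  qed
  finally have X: "(V^n) $ (n-1) = \<iota>^n * (\<Sum>s=0..n-1. fps_const ((-1)^s * of_nat ((n-1+s) choose s)) * \<iota>^s * (B^s) $ (n-1))" .
  show ?thesis
    unfolding X sum_distrib_left
    by (intro sum.cong refl) (simp add: power_add mult.assoc mult.left_commute)
qed



lemma fps_const_prod: "fps_const (prod f A) = (\<Prod>x\<in>A. fps_const (f x :: 'b::comm_ring_1))"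
  by (induction A rule: infinite_finite_induct) (simp_all del: fps_const_mult add: fps_const_mult[symmetric])

lemma sum_shift1: "(\<Sum>i=1..Suc p. f i) = f 1 + (\<Sum>i=1..p. f (Suc i) :: 'b::comm_monoid_add)"
proof -
  have "sum f {1..Suc p} = f 1 + sum f {Suc 1..Suc p}" by (rule sum.atLeast_Suc_atMost) simp
  also have "sum f {Suc 1..Suc p} = sum (\<lambda>i. f (Suc i)) {1..p}" by (rule sum.shift_bounds_cl_Suc_ivl)
  finally show ?thesis .
qed

lemma prod_shift1: "(\<Prod>i=1..Suc p. f i) = f 1 * (\<Prod>i=1..p. f (Suc i) :: 'b::comm_monoid_mult)"
proof -
  have "prod f {1..Suc p} = f 1 * prod f {Suc 1..Suc p}" by (rule prod.atLeast_Suc_atMost) simp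
  also have "prod f {Suc 1..Suc p} = prod (\<lambda>i. f (Suc i)) {1..p}" by (rule prod.shift_bounds_cl_Suc_ivl)
  finally show ?thesis .
qed

lemma prod_shift2: "(\<Prod>i=2..Suc p. f i) = (\<Prod>i=1..p. f (Suc i) :: 'b::comm_monoid_mult)"
  using prod.shift_bounds_cl_Suc_ivl[of f 1 p] by (simp add: numeral_2_eq_2)

definition up :: "nat \<Rightarrow> nat \<Rightarrow> (nat \<Rightarrow> nat) \<Rightarrow> nat \<Rightarrow> nat" where
  "up p s r' = (\<lambda>i. if i = 1 then p - s else if 2 \<le> i \<and> i \<le> Suc p then r' (i - 1) else 0)"

definition down :: "nat \<Rightarrow> (nat \<Rightarrow> nat) \<Rightarrow> nat \<Rightarrow> nat" where
  "down p r = (\<lambda>i. if 1 \<le> i \<and> i \<le> p then r (Suc i) else 0)"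

lemma up_shift: "i \<in> {1..p} \<Longrightarrow> up p s r' (Suc i) = r' i"
  by (auto simp: up_def)

lemma A_idx_bij:
  "bij_betw (\<lambda>(s, r'). up p s r') (Sigma {0..p} (\<lambda>s. IS p s p)) (A_idx (Suc p))"
proof (rule bij_betw_byWitness[where f' = "\<lambda>r. (p - r 1, down p r)"])
  show "\<forall>a\<in>Sigma {0..p} (\<lambda>s. IS p s p). (\<lambda>r. (p - r 1, down p r)) ((\<lambda>(s, r'). up p s r') a) = a"
  proof
    fix a assume "a \<in> Sigma {0..p} (\<lambda>s. IS p s p)"
    then obtain s r' where a: "a = (s, r')" and s: "s \<le> p" and r': "r' \<in> IS p s p" by auto
    have "p - up p s r' 1 = s" using s by (simp add: up_def)
    moreover have "down p (up p s r') = r'"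
    proof (rule ext)
      fix i show "down p (up p s r') i = r' i"
        using r' by (auto simp: down_def up_def IS_def)
    qed
    ultimately show "(\<lambda>r. (p - r 1, down p r)) ((\<lambda>(s, r'). up p s r') a) = a" using a by simp
  qed
  show "\<forall>r\<in>A_idx (Suc p). (\<lambda>(s, r'). up p s r') ((\<lambda>r. (p - r 1, down p r)) r) = r"
  proof
    fix r assume r: "r \<in> A_idx (Suc p)"
    have r1: "r 1 \<le> p"
      using r member_le_sum[of 1 "{1..Suc p}" r] by (simp add: A_idx_def)
    show "(\<lambda>(s, r'). up p s r') ((\<lambda>r. (p - r 1, down p r)) r) = r"
    proof -
      have "up p (p - r 1) (down p r) = r"
      proof (rule ext)
        fix i show "up p (p - r 1) (down p r) i = r i"
          using r r1 by (auto simp: down_def up_def A_idx_def)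
      qed
      then show ?thesis by simp
    qed
  qed
  show "(\<lambda>(s, r'). up p s r') ` Sigma {0..p} (\<lambda>s. IS p s p) \<subseteq> A_idx (Suc p)"
  proof (rule subsetI)
    fix x assume "x \<in> (\<lambda>(s, r'). up p s r') ` Sigma {0..p} (\<lambda>s. IS p s p)"
    then obtain s r' where x: "x = up p s r'" and s: "s \<le> p" and r': "r' \<in> IS p s p" by auto
    have a: "\<forall>i. i \<notin> {1..p} \<longrightarrow> r' i = 0" "(\<Sum>i=1..p. r' i) = s" "(\<Sum>i=1..p. i * r' i) = p"
      using r' by (auto simp: IS_def)
    have u1: "up p s r' 1 = p - s" by (simp add: up_def)
    have e1: "(\<Sum>i=1..p. up p s r' (Suc i)) = (\<Sum>i=1..p. r' i)"
      by (rule sum.cong[OF refl]) (simp add: up_shift)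
    have e2: "(\<Sum>i=1..p. Suc i * up p s r' (Suc i)) = (\<Sum>i=1..p. Suc i * r' i)"
      by (rule sum.cong[OF refl]) (simp add: up_shift)
    have "(\<Sum>i=1..Suc p. up p s r' i) = (p - s) + (\<Sum>i=1..p. r' i)"
      unfolding sum_shift1 e1 u1 ..
    moreover have "(\<Sum>i=1..Suc p. i * up p s r' i) = (p - s) + (\<Sum>i=1..p. i * r' i) + (\<Sum>i=1..p. r' i)"
    proof -
      have "(\<Sum>i=1..Suc p. i * up p s r' i) = (p - s) + (\<Sum>i=1..p. Suc i * r' i)"
        unfolding sum_shift1 using e2 u1 by simp
      also have "(\<Sum>i=1..p. Suc i * r' i) = (\<Sum>i=1..p. i * r' i) + (\<Sum>i=1..p. r' i)"
        by (simp add: sum.distrib)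
      finally show ?thesis by simp
    qed
    moreover have "\<forall>i. i \<notin> {1..Suc p} \<longrightarrow> up p s r' i = 0" by (auto simp: up_def)
    ultimately show "x \<in> A_idx (Suc p)"
      using a s x by (simp add: A_idx_def)
  qed
  show "(\<lambda>r. (p - r 1, down p r)) ` A_idx (Suc p) \<subseteq> Sigma {0..p} (\<lambda>s. IS p s p)"
  proof (rule subsetI)
    fix x assume "x \<in> (\<lambda>r. (p - r 1, down p r)) ` A_idx (Suc p)"
    then obtain r where x: "x = (p - r 1, down p r)" and r: "r \<in> A_idx (Suc p)" by auto
    have a: "\<forall>i. i \<notin> {1..Suc p} \<longrightarrow> r i = 0" "(\<Sum>i=1..Suc p. r i) = p" "(\<Sum>i=1..Suc p. i * r i) = 2 * p"
      using r by (auto simp: A_idx_def)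
    have s1: "r 1 + (\<Sum>i=1..p. r (Suc i)) = p" using a(2) unfolding sum_shift1 .
    have "r 1 + (\<Sum>i=1..p. Suc i * r (Suc i)) = 2 * p" using a(3) unfolding sum_shift1 by simp
    then have s2: "r 1 + (\<Sum>i=1..p. i * r (Suc i)) + (\<Sum>i=1..p. r (Suc i)) = 2 * p"
      by (simp add: sum.distrib add.assoc)
    have d1: "(\<Sum>i=1..p. down p r i) = (\<Sum>i=1..p. r (Suc i))"
      by (rule sum.cong) (auto simp: down_def)
    have d2: "(\<Sum>i=1..p. i * down p r i) = (\<Sum>i=1..p. i * r (Suc i))"
      by (rule sum.cong) (auto simp: down_def)
    have "down p r \<in> IS p (p - r 1) p"
      unfolding IS_def using d1 d2 s1 s2 by (auto simp: down_def)
    then show "x \<in> Sigma {0..p} (\<lambda>s. IS p s p)" using x by simp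
  qed
qed

lemma A1_eq:
  fixes \<phi> :: "nat \<Rightarrow> 'a::field_char_0 fps"
  assumes phi1: "(\<phi> 1)$0 \<noteq> 0" and n: "n = Suc p"
  defines "U \<equiv> Abs_fps (\<lambda>k. \<phi> (k+1) * fps_const (inverse (fact (k+1))))"
  shows "A1 n \<phi> = fps_const (fact (n-1)) * ((fps_right_inverse U (inverse (\<phi> 1)))^n) $ (n-1)"
proof -
  define \<iota> where "\<iota> = inverse (\<phi> 1)"
  have ci: "\<phi> 1 * \<iota> = 1" unfolding \<iota>_def using inverse_mult_eq_1'[OF phi1] .
  define V where "V = fps_right_inverse U \<iota>"
  have U0: "U$0 = \<phi> 1" by (simp add: U_def)
  have UV: "U * V = 1" unfolding V_def by (rule fps_right_inverse) (subst U0, rule ci)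
  define B where "B = U - fps_const (\<phi> 1)"
  have B0: "B$0 = 0" by (simp add: B_def U0)
  have Bi: "i \<ge> 1 \<Longrightarrow> B$i = \<phi> (Suc i) * fps_const (inverse (fact (Suc i)))" for i
    by (simp add: B_def U_def)
  define c where "c = (\<lambda>s. fps_const ((-1)^s * fact (p+s)) :: 'a fps)"
  have "fps_const (fact (n-1)) * (V^n) $ (n-1)
      = (\<Sum>s=0..p. \<Sum>r'\<in>IS p s p. c s * \<iota>^(n+s) * mt p B r')"
  proof -
    have "fps_const (fact (n-1)) * (V^n) $ (n-1) =
      fps_const (fact p) * (\<Sum>s=0..p. fps_const ((-1)^s * of_nat ((p+s) choose s)) * \<iota>^(n+s) * (B^s) $ p)"
      using neg_binomial[OF U0 ci UV B_def, of n] n by simp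
    also have "\<dots> = (\<Sum>s=0..p. \<Sum>r'\<in>IS p s p. c s * \<iota>^(n+s) * mt p B r')"
      unfolding sum_distrib_left
    proof (rule sum.cong[OF refl])
      fix s assume "s \<in> {0..p}"
      have cs: "fps_const (fact p) * (fps_const ((-1)^s * of_nat ((p+s) choose s)) * fps_const (fact s)) = c s"
      proof -
        have "(fact p :: 'a) * ((-1)^s * of_nat ((p+s) choose s) * fact s) = (-1)^s * fact (p+s)"
        proof -
          have "fact p * fact s * ((p+s) choose s) = fact (p+s)"
            using binomial_fact_lemma[of s "p+s"] by (simp add: algebra_simps)
          then have h: "(fact p * fact s * of_nat ((p+s) choose s) :: 'a) = fact (p+s)"
            by (metis of_nat_fact of_nat_mult)
          show ?thesis unfolding h[symmetric] by (simp add: algebra_simps)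
        qed
        note eq = this
        have "fps_const (fact p) * (fps_const ((-1)^s * of_nat ((p+s) choose s)) * fps_const (fact s))
            = fps_const ((fact p :: 'a) * ((-1)^s * of_nat ((p+s) choose s) * fact s))"
          by (simp only: fps_const_mult)
        also have "\<dots> = c s" unfolding c_def eq ..
        finally show ?thesis .
      qed
      show "fps_const (fact p) * (fps_const ((-1)^s * of_nat ((p+s) choose s)) * \<iota>^(n+s) * (B^s) $ p)
          = (\<Sum>r'\<in>IS p s p. c s * \<iota>^(n+s) * mt p B r')"
        unfolding multinomial[OF B0 le_refl] sum_distrib_left[symmetric] cs[symmetric]
        by (simp add: algebra_simps)
    qed
    finally show ?thesis .
  qed
  also have "\<dots> = (\<Sum>(s,r')\<in>Sigma {0..p} (\<lambda>s. IS p s p). c s * \<iota>^(n+s) * mt p B r')"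
    by (simp add: sum.Sigma finite_IS)
  also have "\<dots> = A1 n \<phi>"
  proof -
    define T where "T = (\<lambda>r. fps_const ((-1) ^ (n - 1 - r 1) * fact (2 * n - 2 - r 1) /
                   (\<Prod>i=2..n. fact (r i) * fact i ^ r i)) * (\<Prod>i=1..n. \<phi> i ^ r i))"
    have "A1 n \<phi> = \<iota>^(2*n-1) * (\<Sum>r\<in>A_idx n. T r)"
      by (simp add: A1_def T_def \<iota>_def)
    also have "(\<Sum>r\<in>A_idx n. T r) = (\<Sum>(s,r')\<in>Sigma {0..p} (\<lambda>s. IS p s p). T (up p s r'))"
      unfolding n using sum.reindex_bij_betw[OF A_idx_bij[of p], of T]
      by (simp add: case_prod_unfold)
    also have "\<iota>^(2*n-1) * \<dots> = (\<Sum>(s,r')\<in>Sigma {0..p} (\<lambda>s. IS p s p). c s * \<iota>^(n+s) * mt p B r')"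
      unfolding sum_distrib_left
    proof (rule sum.cong[OF refl])
      fix x assume "x \<in> Sigma {0..p} (\<lambda>s. IS p s p)"
      then obtain s r' where x: "x = (s, r')" and s: "s \<le> p" and r': "r' \<in> IS p s p" by auto
      let ?r = "up p s r'"
      have r1: "?r 1 = p - s" by (simp add: up_def)
      have P1: "(\<Prod>i=2..n. fact (?r i) * fact i ^ ?r i) = (\<Prod>i=1..p. fact (r' i) * fact (Suc i) ^ r' i :: 'a)"
        unfolding n prod_shift2 by (rule prod.cong) (auto simp: up_shift)
      have P2: "(\<Prod>i=1..n. \<phi> i ^ ?r i) = \<phi> 1 ^ (p - s) * (\<Prod>i=1..p. \<phi> (Suc i) ^ r' i)"
      proof -
        have "(\<Prod>i=1..p. \<phi> (Suc i) ^ ?r (Suc i)) = (\<Prod>i=1..p. \<phi> (Suc i) ^ r' i)"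
          by (rule prod.cong) (auto simp: up_shift)
        then show ?thesis unfolding n prod_shift1 r1 by simp
      qed
      have io: "\<iota>^(2*n-1) * \<phi> 1 ^ (p - s) = \<iota>^(n+s)"
      proof -
        have "2*n-1 = (n+s) + (p-s)" using n s by simp
        then have "\<iota>^(2*n-1) * \<phi> 1 ^ (p - s) = \<iota>^(n+s) * (\<phi> 1 * \<iota>)^(p-s)"
          by (simp add: power_add power_mult_distrib algebra_simps)
        then show ?thesis using ci by simp
      qed
      have M: "mt p B r' = fps_const (\<Prod>i=1..p. inverse (fact (r' i)) * inverse (fact (Suc i)) ^ r' i)
                  * (\<Prod>i=1..p. \<phi> (Suc i) ^ r' i)"
        unfolding mt_def fps_const_prod prod.distrib[symmetric]
        by (rule prod.cong) (auto simp: Bi power_mult_distrib algebra_simps)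
      have C: "(-1) ^ (n - 1 - ?r 1) * fact (2 * n - 2 - ?r 1) / (\<Prod>i=1..p. fact (r' i) * fact (Suc i) ^ r' i)
            = (-1)^s * fact (p+s) * (\<Prod>i=1..p. inverse (fact (r' i)) * inverse (fact (Suc i)) ^ r' i :: 'a)"
      proof -
        have "n - 1 - ?r 1 = s" "2 * n - 2 - ?r 1 = p + s" using r1 n s by auto
        moreover have "inverse (\<Prod>i=1..p. fact (r' i) * fact (Suc i) ^ r' i :: 'a) =
              (\<Prod>i=1..p. inverse (fact (r' i)) * inverse (fact (Suc i)) ^ r' i)"
        proof -
          have "inverse (\<Prod>i=1..p. fact (r' i) * fact (Suc i) ^ r' i :: 'a) =
              (\<Prod>i=1..p. inverse (fact (r' i) * fact (Suc i) ^ r' i))"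
            by (simp only: prod_inversef[symmetric] o_def)
          also have "\<dots> = (\<Prod>i=1..p. inverse (fact (r' i)) * inverse (fact (Suc i)) ^ r' i)"
            by (simp only: inverse_mult_distrib power_inverse)
          finally show ?thesis .
        qed
        ultimately show ?thesis by (simp add: divide_inverse)
      qed
      have "\<iota>^(2*n-1) * T ?r = c s * \<iota>^(n+s) * mt p B r'"
        unfolding T_def P1 P2 C M c_def
        using io by (simp add: algebra_simps)
      then show "\<iota>^(2*n-1) * (case x of (s, r') \<Rightarrow> T (up p s r')) = (case x of (s, r') \<Rightarrow> c s * \<iota>^(n+s) * mt p B r')"
        using x by simp
    qed
    finally show ?thesis ..
  qed
  finally show ?thesis by (simp add: V_def \<iota>_def)
qed



lemma neg_power_nth: "((- f)^k) $ n = (-1)^k * ((f::'a::field_char_0 fps)^k) $ n"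
proof -
  have "(-1::'a fps)^k = fps_const ((-1)^k)"
    by (metis fps_const_neg fps_const_1_eq_1 fps_const_power)
  then show ?thesis by (simp add: power_minus[of f])
qed

theorem mainTheorem1:
  fixes F :: "nat \<Rightarrow> nat \<Rightarrow> 'a::field_char_0" and Y :: "'a fps"
  assumes "F 0 0 = 0" and "F 0 1 \<noteq> 0"
    and "fps_nth Y 0 = 0" and "subst2 F Y = 0"
  shows "\<forall>m\<ge>1. fact m * fps_nth Y m =
     (\<Sum>n=1..m. of_nat (m choose n) *
        (\<Sum>k=1..n. (-1) ^ k * a_coeff F k (m - n) * bell_poly n k (\<lambda>i. F i 0)))"
proof -
  note F00 = assms(1) and F01 = assms(2) and Y0 = assms(3) and sub = assms(4)
  define \<phi> where "\<phi> = phi F"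
  have phi1: "(\<phi> 1)$0 \<noteq> 0" using F01 by (simp add: \<phi>_def phi_def efps_def)
  define U where "U = Abs_fps (\<lambda>k. \<phi> (k+1) * fps_const (inverse (fact (k+1))))"
  define G :: "'a fps fps" where "G = Abs_fps (\<lambda>k. if k = 0 then 0 else \<phi> k * fps_const (inverse (fact k)))"
  have GU: "G = fps_X * U"
  proof (rule fps_ext)
    fix k show "G $ k = (fps_X * U) $ k"
      by (cases k) (simp_all add: G_def U_def fps_X_mult_nth del: fact_Suc)
  qed
  define \<iota> where "\<iota> = inverse (\<phi> 1)"
  have ci: "\<phi> 1 * \<iota> = 1" unfolding \<iota>_def using inverse_mult_eq_1'[OF phi1] .
  have G0: "G$0 = 0" by (simp add: G_def)
  have G1: "G$1 * \<iota> = 1" using ci by (simp add: G_def)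
  define h where "h = Abs_fps (lci G \<iota>)"
  have hG: "h oo G = fps_X" and Gh: "G oo h = fps_X"
    using two_sided_inverse[OF G0 G1] by (simp_all add: h_def)
  have h0: "h$0 = 0" by (simp add: h_def)
  define V where "V = fps_right_inverse U \<iota>"
  have U0: "U$0 = \<phi> 1" by (simp add: U_def)
  have UV: "U * V = 1" unfolding V_def by (rule fps_right_inverse) (subst U0, rule ci)
  have char0: "\<forall>m (x::'a fps). m > 0 \<longrightarrow> of_nat m * x = 0 \<longrightarrow> x = 0"
    by (simp add: fps_of_nat)
  have hk: "h$k = fps_const (inverse (fact k)) * A1 k \<phi>" if k1: "k \<ge> 1" for k
  proof -
    obtain p where k: "k = Suc p" using k1 by (cases k) auto
    have l: "of_nat k * h$k = (V^k)$(k-1)"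
      by (rule lagrange[OF char0 GU UV h0 Gh]) (use k in simp)
    have "A1 k \<phi> = fps_const (fact (k-1)) * (V^k)$(k-1)"
      using A1_eq[where \<phi>=\<phi>, OF phi1 k] by (simp add: U_def V_def \<iota>_def)
    also have "\<dots> = fps_const (fact (k-1)) * of_nat k * h$k" unfolding l[symmetric] by (simp add: mult.assoc)
    also have "fps_const (fact (k-1)) * of_nat k = (fps_const (fact k) :: 'a fps)"
      using k by (metis diff_Suc_1 fps_const_mult fps_of_nat fact_Suc mult.commute)
    finally have "A1 k \<phi> = fps_const (fact k) * h$k" .
    then have "fps_const (inverse (fact k)) * A1 k \<phi> = (fps_const (inverse (fact k)) * fps_const (fact k)) * h$k"
      by (simp add: mult.assoc)
    also have "fps_const (inverse (fact k)) * fps_const (fact k) = (1 :: 'a fps)" by simp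
    finally show ?thesis by simp
  qed
  define s0 where "s0 = - \<phi> 0"
  have evG: "ev G Y = s0"
  proof (rule fps_ext)
    fix m
    have "(subst2 F Y) $ m = 0" using sub by simp
    then have e0: "(\<Sum>n=0..m. (\<phi> n * Y^n * fps_const (inverse (fact n))) $ m) = 0"
      by (simp add: subst2_def \<phi>_def atLeast0AtMost)
    have "(ev G Y) $ m = (\<Sum>j=0..m. (G$j * Y^j) $ m)" by (simp add: ev_def fps_sum_nth)
    also have "\<dots> = (\<Sum>n=0..m. (\<phi> n * Y^n * fps_const (inverse (fact n))) $ m) - (\<phi> 0) $ m"
    proof -
      have "(\<Sum>j=0..m. (G$j * Y^j) $ m) = (G$0 * Y^0) $ m + (\<Sum>j=Suc 0..m. (G$j * Y^j) $ m)"
        by (rule sum.atLeast_Suc_atMost) simp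
      moreover have "(\<Sum>n=0..m. (\<phi> n * Y^n * fps_const (inverse (fact n))) $ m) =
          (\<phi> 0 * Y^0 * fps_const (inverse (fact 0))) $ m + (\<Sum>n=Suc 0..m. (\<phi> n * Y^n * fps_const (inverse (fact n))) $ m)"
        by (rule sum.atLeast_Suc_atMost) simp
      moreover have "(\<Sum>j=Suc 0..m. (G$j * Y^j) $ m) = (\<Sum>n=Suc 0..m. (\<phi> n * Y^n * fps_const (inverse (fact n))) $ m)"
        by (rule sum.cong[OF refl]) (simp add: G_def mult.commute mult.left_commute)
      ultimately show ?thesis by (simp add: G0)
    qed
    also have "\<dots> = s0 $ m" using e0 by (simp add: s0_def)
    finally show "ev G Y $ m = s0 $ m" .
  qed
  have Ys: "Y = ev h s0"
  proof -
    have "Y = ev fps_X Y" by (simp add: ev_X[OF Y0])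
    also have "\<dots> = ev (h oo G) Y" by (simp add: hG)
    also have "\<dots> = ev h (ev G Y)" by (rule ev_compose[OF Y0 G0])
    finally show ?thesis by (simp add: evG)
  qed
  define \<phi>0 where "\<phi>0 = \<phi> 0"
  have phi0: "\<phi>0 = Abs_fps (\<lambda>i. if i = 0 then 0 else F i 0 / fact i)"
    by (rule fps_ext) (simp add: \<phi>0_def \<phi>_def phi_def efps_def F00)
  have phi00: "\<phi>0 $ 0 = 0" by (simp add: phi0)
  have bell: "(\<phi>0^k) $ n = fact k / fact n * bell_poly n k (\<lambda>i. F i 0)" for n k
    by (simp add: bell_poly_def phi0[symmetric])
  have bell0: "bell_poly n k (\<lambda>i. F i 0) = 0" if "n < k" for n k
    using startsby_zero_power_prefix[OF phi00] that by (simp add: bell_poly_def phi0[symmetric])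
  have anth: "(A1 k \<phi>) $ j = a_coeff F k j / fact j" for k j
    by (simp add: a_coeff_def \<phi>_def)
  let ?g = "\<lambda>k n. (-1) ^ k * of_nat (m choose n) * a_coeff F k (m - n) * bell_poly n k (\<lambda>i. F i 0)"
  show ?thesis
  proof (intro allI impI)
    fix m :: nat assume m: "m \<ge> 1"
    let ?g = "\<lambda>k n. (-1) ^ k * of_nat (m choose n) * a_coeff F k (m - n) * bell_poly n k (\<lambda>i. F i 0)"
    have "fact m * Y $ m = (\<Sum>k=0..m. fact m * (h$k * s0^k) $ m)"
      by (simp add: Ys ev_def fps_sum_nth sum_distrib_left)
    also have "\<dots> = (\<Sum>k=1..m. fact m * (h$k * s0^k) $ m)"
      by (simp add: sum.atLeast_Suc_atMost h0)
    also have "\<dots> = (\<Sum>k=1..m. \<Sum>n=0..m. ?g k n)"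
    proof (rule sum.cong[OF refl])
      fix k assume k: "k \<in> {1..m}"
      have "(h$k * s0^k) $ m = inverse (fact k) * (A1 k \<phi> * s0^k) $ m"
        using k by (simp add: hk mult.assoc)
      also have "(A1 k \<phi> * s0^k) $ m = (\<Sum>n=0..m. (s0^k) $ n * (A1 k \<phi>) $ (m - n))"
        by (simp add: fps_mult_nth mult.commute[of "A1 k \<phi>"])
      finally have "fact m * (h$k * s0^k) $ m =
          (\<Sum>n=0..m. fact m * inverse (fact k) * ((s0^k) $ n * (A1 k \<phi>) $ (m - n)))"
        by (simp add: sum_distrib_left mult.assoc)
      also have "\<dots> = (\<Sum>n=0..m. ?g k n)"
      proof (rule sum.cong[OF refl])
        fix n assume n: "n \<in> {0..m}"
        have sk: "(s0^k) $ n = (-1)^k * (fact k / fact n * bell_poly n k (\<lambda>i. F i 0))"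
          unfolding s0_def \<phi>0_def[symmetric] neg_power_nth bell ..
        have mc: "(of_nat (m choose n) :: 'a) = fact m / (fact n * fact (m - n))"
          using n by (simp add: binomial_fact)
        show "fact m * inverse (fact k) * ((s0^k) $ n * (A1 k \<phi>) $ (m - n)) = ?g k n"
          unfolding sk mc anth by (simp add: field_simps)
      qed
      finally show "fact m * (h$k * s0^k) $ m = (\<Sum>n=0..m. ?g k n)" .
    qed
    also have "\<dots> = (\<Sum>n=0..m. \<Sum>k=1..m. ?g k n)" by (rule sum.swap)
    also have "\<dots> = (\<Sum>n=1..m. \<Sum>k=1..m. ?g k n)"
      by (simp add: sum.atLeast_Suc_atMost bell0)
    also have "\<dots> = (\<Sum>n=1..m. \<Sum>k=1..n. ?g k n)"
    proof (rule sum.cong[OF refl])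
      fix n assume n: "n \<in> {1..m}"
      show "(\<Sum>k=1..m. ?g k n) = (\<Sum>k=1..n. ?g k n)"
        by (rule sum.mono_neutral_right) (use n bell0 in auto)
    qed
    also have "\<dots> = (\<Sum>n=1..m. of_nat (m choose n) *
        (\<Sum>k=1..n. (-1) ^ k * a_coeff F k (m - n) * bell_poly n k (\<lambda>i. F i 0)))"
      by (simp add: sum_distrib_left algebra_simps)
    finally show "fact m * fps_nth Y m = (\<Sum>n=1..m. of_nat (m choose n) *
        (\<Sum>k=1..n. (-1) ^ k * a_coeff F k (m - n) * bell_poly n k (\<lambda>i. F i 0)))" .
  qed
qed


end
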